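(* Let $(i,j)\in J$ and let $a_{i,j}=\ell_{i,j}+f_{i,j}(\ell_{i,j}^* )$ be a strongly matricially free Toeplitz operator on $\mathcal{N}$, where $f_{i,j}(w)=\sum_{n=0}^{d}c_{i,j}(n)w^n$ is a polynomial with complex coefficients. Then the R-transform of the distribution $\mu_{i,j}$ of $a_{i,j}$ in the state $\varphi_{i,j}$ is $$R_{i,j}(z)=f_{i,j}(\alpha_{i,j}^2z),$$ where on the right $f_{i,j}$ is the scalar polynomial (constant term the complex number $c_{i,j}(0)$).
   Context: Fock space. Let $J\subseteq\{1,2\}\times\{1,2\}$, $(\alpha_{i,j})_{(i,j)\in J}$ positive reals, $\{e_{i,j}:(i,j)\in J\}$ orthonormal vectors and $\mathcal{F}$ the full Fock space over $\bigoplus_{(i,j)\in J}\mathbb{C}e_{i,j}$ with vacuum $\Omega$. The strongly matricially free Fock space $\mathcal{N}\subseteq\mathcal{F}$ is the closed span of $\Omega$ and all simple tensors $e_{i_1,i_2}^{\otimes n_1}\otimes e_{i_2,i_3}^{\otimes n_2}\otimes\dots\otimes e_{i_{m-1},i_m}^{\otimes n_{m-1}}\otimes e_{i_m,i_m}^{\otimes n_m}$ ($m\ge1$, $n_k\ge1$, $i_1\neq\dots\neq i_m$, all pairs in $J$). With $P$ the projection onto $\mathcal{N}$ and $\ell(e)w=e\otimes w$, set $\ell_{i,j}=\alpha_{i,j}P\ell(e_{i,j})|_{\mathcal{N}}$. Let $\mathcal{N}_{i,j}$ be the closed span of those simple tensors whose first factor is $e_{i,j}$; the internal unit $1_{j,j}$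 is the projection onto $\mathbb{C}\Omega\oplus\mathcal{N}_{j,j}$ and, for $i\neq j$, $1_{i,j}$ is the projection onto $\mathcal{N}\ominus(\mathbb{C}\Omega\oplus\mathcal{N}_{i,i})$. The state $\varphi_{i,j}$ on $B(\mathcal{N})$ is $x\mapsto\langle x\Omega_{i,j},\Omega_{i,j}\rangle$, where $\Omega_{j,j}=\Omega$ and $\Omega_{i,j}=e_{j,j}$ for $i\neq j$ (for off-diagonal $(i,j)$ it is understood that $(j,j)\in J$). The strongly matricially free Toeplitz operator is $a_{i,j}=\ell_{i,j}+f_{i,j}(\ell_{i,j}^* )$ with $f_{i,j}(\ell_{i,j}^* ):=c_{i,j}(0)1_{i,j}+\sum_{n\ge1}c_{i,j}(n)(\ell_{i,j}^* )^n$. The distribution of $x$ in a state $\omega$ is the sequence of moments $\omega(x^n)$; its Cauchy transform is $G(w)=\sum_{n\ge0}\omega(x^n)w^{-n-1}$ (for $|w|$ large) and its R-transform is the power series $R$, analytic near $0$, with $G(1/z+R(z))=z$ for small $|z|>0$. *)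

theory Defs
  imports Complex_Main
begin

text \<open>A simple tensor e_{p_1} (x) ... (x) e_{p_L} of the full Fock space is encoded by the word
  [p_1,...,p_L]; the empty word encodes the vacuum.  Vectors are coefficient functions
  on words; all operators below act coordinatewise, so they agree with the Hilbert space
  operators on finitely supported vectors (which is all that the moments involve).\<close>

type_synonym word = "(nat \<times> nat) list"
type_synonym vec = "word \<Rightarrow> complex"

definition blk :: "nat list \<Rightarrow> nat \<Rightarrow> nat \<times> nat" where
  "blk is k = (if Suc k < length is then (is ! k, is ! Suc k) else (is ! k, is ! k))"

text \<open>Basis words of the strongly matricially free Fock space N.\<close>
definition smf_word :: "(nat \<times> nat) set \<Rightarrow> word \<Rightarrow> bool" where
  "smf_word J w \<longleftrightarrow> w = [] \<or>
     (\<exists>is ns. is \<noteq> [] \<and> length ns = length is \<and> (\<forall>k<length ns. ns ! k \<ge> 1) \<and>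
        (\<forall>k. Suc k < length is \<longrightarrow> is ! k \<noteq> is ! Suc k) \<and>
        (\<forall>k<length is. blk is k \<in> J) \<and>
        w = concat (map (\<lambda>k. replicate (ns ! k) (blk is k)) [0..<length is]))"

text \<open>l_{i,j} = alpha_{i,j} P l(e_{i,j}) restricted to N.\<close>
definition smf_l :: "(nat \<times> nat) set \<Rightarrow> (nat \<times> nat \<Rightarrow> real) \<Rightarrow> nat \<Rightarrow> nat \<Rightarrow> vec \<Rightarrow> vec" where
  "smf_l J \<alpha> i j v = (\<lambda>w. if smf_word J w \<and> w \<noteq> [] \<and> hd w = (i, j)
                            then complex_of_real (\<alpha> (i, j)) * v (tl w) else 0)"

definition smf_lstar :: "(nat \<times> nat) set \<Rightarrow> (nat \<times> nat \<Rightarrow> real) \<Rightarrow> nat \<Rightarrow> nat \<Rightarrow> vec \<Rightarrow> vec" where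
  "smf_lstar J \<alpha> i j v = (\<lambda>w. if smf_word J w
                            then complex_of_real (\<alpha> (i, j)) * v ((i, j) # w) else 0)"

definition smf_unit :: "(nat \<times> nat) set \<Rightarrow> nat \<Rightarrow> nat \<Rightarrow> vec \<Rightarrow> vec" where
  "smf_unit J i j v = (\<lambda>w. if smf_word J w \<and>
        (if i = j then (w = [] \<or> hd w = (j, j)) else (w \<noteq> [] \<and> hd w \<noteq> (i, i)))
      then v w else 0)"

definition smf_toeplitz :: "(nat \<times> nat) set \<Rightarrow> (nat \<times> nat \<Rightarrow> real) \<Rightarrow> nat \<Rightarrow> nat \<Rightarrow>
    (nat \<Rightarrow> complex) \<Rightarrow> nat \<Rightarrow> vec \<Rightarrow> vec" where
  "smf_toeplitz J \<alpha> i j c d v = (\<lambda>w. smf_l J \<alpha> i j v w + c 0 * smf_unit J i j v w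
      + (\<Sum>n\<in>{1..d}. c n * ((smf_lstar J \<alpha> i j ^^ n) v) w))"

definition smf_vac :: "nat \<Rightarrow> nat \<Rightarrow> word" where
  "smf_vac i j = (if i = j then [] else [(j, j)])"

definition smf_state :: "nat \<Rightarrow> nat \<Rightarrow> (vec \<Rightarrow> vec) \<Rightarrow> complex" where
  "smf_state i j x = x (\<lambda>w. if w = smf_vac i j then 1 else 0) (smf_vac i j)"

definition smf_moment :: "(nat \<times> nat) set \<Rightarrow> (nat \<times> nat \<Rightarrow> real) \<Rightarrow> nat \<Rightarrow> nat \<Rightarrow>
    (nat \<Rightarrow> complex) \<Rightarrow> nat \<Rightarrow> nat \<Rightarrow> complex" where
  "smf_moment J \<alpha> i j c d n = smf_state i j (smf_toeplitz J \<alpha> i j c d ^^ n)"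

definition cauchy_series :: "(nat \<Rightarrow> complex) \<Rightarrow> complex \<Rightarrow> nat \<Rightarrow> complex" where
  "cauchy_series m w = (\<lambda>n. m n / w ^ Suc n)"

definition is_R_transform :: "(nat \<Rightarrow> complex) \<Rightarrow> (complex \<Rightarrow> complex) \<Rightarrow> bool" where
  "is_R_transform m R \<longleftrightarrow> (\<exists>\<epsilon>>0. \<forall>z. 0 < norm z \<and> norm z < \<epsilon> \<longrightarrow>
      cauchy_series m (1 / z + R z) sums z)"

end

theory Submission
  imports Defs
begin


definition om :: "nat \<Rightarrow> nat \<Rightarrow> complex \<Rightarrow> vec" where
  "om i j q u = (if \<exists>m. u = replicate m (i,j) @ smf_vac i j
      then q ^ (length u - length (smf_vac i j)) else 0)"

lemma form_smf:
  assumes "(i,j) \<in> J" "i \<noteq> j \<longrightarrow> (j,j) \<in> J"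
  shows "smf_word J (replicate m (i,j) @ smf_vac i j)"
proof (cases "i = j")
  case True
  show ?thesis
  proof (cases m)
    case 0 then show ?thesis using True by (simp add: smf_word_def smf_vac_def)
  next
    case (Suc k)
    show ?thesis unfolding smf_word_def
      apply (rule disjI2)
      apply (rule exI[of _ "[j]"], rule exI[of _ "[m]"])
      using True Suc assms by (simp add: blk_def smf_vac_def)
  qed
next
  case False
  show ?thesis
  proof (cases m)
    case 0 then show ?thesis unfolding smf_word_def
      apply -
      apply (rule disjI2)
      apply (rule exI[of _ "[j]"], rule exI[of _ "[1]"])
      using False assms by (simp add: blk_def smf_vac_def)
  next
    case (Suc k)
    have u: "[0..<2] = [0,1]" by (simp add: upt_rec)
    show ?thesis unfolding smf_word_def
      apply (rule disjI2)
      apply (rule exI[of _ "[i,j]"], rule exI[of _ "[m,1]"])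
      using False Suc assms by (auto simp add: blk_def smf_vac_def u less_Suc_eq)
  qed
qed

lemma not_form_cons:
  assumes "\<not> (\<exists>m. u = replicate m (i,j) @ smf_vac i j)"
  shows "\<not> (\<exists>m. (i,j) # u = replicate m (i,j) @ smf_vac i j)"
proof
  assume "\<exists>m. (i,j) # u = replicate m (i,j) @ smf_vac i j"
  then obtain m where m: "(i,j) # u = replicate m (i,j) @ smf_vac i j" by blast
  show False
  proof (cases m)
    case 0 then show False using m by (auto simp: smf_vac_def split: if_splits)
  next
    case (Suc k) then show False using m assms by auto
  qed
qed

lemma lstar_om:
  assumes "(i,j) \<in> J" "i \<noteq> j \<longrightarrow> (j,j) \<in> J"
  shows "smf_lstar J \<alpha> i j (om i j q) = (\<lambda>u. complex_of_real (\<alpha> (i,j)) * q * om i j q u)"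
proof
  fix u
  show "smf_lstar J \<alpha> i j (om i j q) u = complex_of_real (\<alpha> (i,j)) * q * om i j q u"
  proof (cases "\<exists>m. u = replicate m (i,j) @ smf_vac i j")
    case True
    then obtain m where m: "u = replicate m (i,j) @ smf_vac i j" by blast
    have c: "(i,j) # u = replicate (Suc m) (i,j) @ smf_vac i j" using m by simp
    have "\<exists>m. (i,j) # u = replicate m (i,j) @ smf_vac i j" using c by blast
    then show ?thesis using True form_smf[OF assms, of m] m
      by (simp add: smf_lstar_def om_def)
  next
    case False
    then show ?thesis using not_form_cons[OF False]
      by (simp add: smf_lstar_def om_def)
  qed
qed

lemma lstar_scale:
  "smf_lstar J \<alpha> i j (\<lambda>u. a * v u) = (\<lambda>u. a * smf_lstar J \<alpha> i j v u)"
  by (auto simp: smf_lstar_def)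

lemma lstar_pow_om:
  assumes "(i,j) \<in> J" "i \<noteq> j \<longrightarrow> (j,j) \<in> J"
  shows "(smf_lstar J \<alpha> i j ^^ n) (om i j q) = (\<lambda>u. (complex_of_real (\<alpha> (i,j)) * q) ^ n * om i j q u)"
proof (induction n)
  case 0 then show ?case by simp
next
  case (Suc n)
  have "(smf_lstar J \<alpha> i j ^^ Suc n) (om i j q) = smf_lstar J \<alpha> i j ((smf_lstar J \<alpha> i j ^^ n) (om i j q))" by simp
  also have "\<dots> = (\<lambda>u. (complex_of_real (\<alpha> (i,j)) * q) ^ n * smf_lstar J \<alpha> i j (om i j q) u)"
    using Suc by (simp only: lstar_scale)
  finally show ?case by (simp add: lstar_om[OF assms] mult_ac)
qed

lemma unit_om:
  assumes "(i,j) \<in> J" "i \<noteq> j \<longrightarrow> (j,j) \<in> J"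
  shows "smf_unit J i j (om i j q) = om i j q"
proof
  fix u
  show "smf_unit J i j (om i j q) u = om i j q u"
  proof (cases "\<exists>m. u = replicate m (i,j) @ smf_vac i j")
    case True
    then obtain m where m: "u = replicate m (i,j) @ smf_vac i j" by blast
    then show ?thesis using form_smf[OF assms, of m]
      by (cases m) (auto simp: smf_unit_def smf_vac_def)
  next
    case False
    then show ?thesis by (simp add: smf_unit_def om_def)
  qed
qed

lemma l_om:
  assumes "(i,j) \<in> J" "i \<noteq> j \<longrightarrow> (j,j) \<in> J"
  shows "z * smf_l J \<alpha> i j (om i j (complex_of_real (\<alpha> (i,j)) * z)) u
    = om i j (complex_of_real (\<alpha> (i,j)) * z) u - (if u = smf_vac i j then 1 else 0)"
proof (cases "\<exists>m. u = replicate m (i,j) @ smf_vac i j")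
  case True
  then obtain m where m: "u = replicate m (i,j) @ smf_vac i j" by blast
  show ?thesis
  proof (cases m)
    case 0
    then show ?thesis using m by (auto simp: smf_l_def om_def smf_vac_def)
  next
    case (Suc k)
    have tl: "tl u = replicate k (i,j) @ smf_vac i j" using m Suc by simp
    have ne: "u \<noteq> smf_vac i j" using m Suc by (auto simp: smf_vac_def)
    have "\<exists>m. tl u = replicate m (i,j) @ smf_vac i j" using tl by blast
    then show ?thesis using form_smf[OF assms, of m] m Suc tl ne True
      by (simp add: smf_l_def om_def algebra_simps)
  qed
next
  case False
  have "\<not> (u \<noteq> [] \<and> hd u = (i,j) \<and> (\<exists>m. tl u = replicate m (i,j) @ smf_vac i j))"
  proof
    assume h: "u \<noteq> [] \<and> hd u = (i,j) \<and> (\<exists>m. tl u = replicate m (i,j) @ smf_vac i j)"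
    then obtain m where "tl u = replicate m (i,j) @ smf_vac i j" by blast
    then have "u = replicate (Suc m) (i,j) @ smf_vac i j" using h
      by (metis append_Cons list.collapse replicate_Suc)
    then show False using False by blast
  qed
  moreover have "u \<noteq> smf_vac i j" using False by (metis append_Nil replicate_0)
  ultimately show ?thesis using False by (auto simp: smf_l_def om_def)
qed

definition lin :: "(vec \<Rightarrow> vec) \<Rightarrow> bool" where
  "lin F \<longleftrightarrow> (\<forall>a b x y. F (\<lambda>u. a * x u + b * y u) = (\<lambda>u. a * F x u + b * F y u))"

lemma lin_l: "lin (smf_l J \<alpha> i j)"
  by (auto simp: lin_def smf_l_def algebra_simps)
lemma lin_lstar: "lin (smf_lstar J \<alpha> i j)"
  by (auto simp: lin_def smf_lstar_def algebra_simps)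
lemma lin_unit: "lin (smf_unit J i j)"
  by (auto simp: lin_def smf_unit_def algebra_simps)
lemma lin_pow: "lin F \<Longrightarrow> lin (F ^^ n)"
  by (induction n) (auto simp: lin_def)

lemma lin_toep: "lin (smf_toeplitz J \<alpha> i j c d)"
proof -
  have L: "lin (smf_l J \<alpha> i j)" "lin (smf_unit J i j)"
    "\<And>n. lin (smf_lstar J \<alpha> i j ^^ n)" using lin_l lin_unit lin_pow[OF lin_lstar] by auto
  show ?thesis unfolding lin_def
  proof (intro allI ext)
    fix a b x y u
    have e1: "\<And>F. lin F \<Longrightarrow> F (\<lambda>u. a * x u + b * y u) u = a * F x u + b * F y u"
      unfolding lin_def by metis
    show "smf_toeplitz J \<alpha> i j c d (\<lambda>u. a * x u + b * y u) u =
         a * smf_toeplitz J \<alpha> i j c d x u + b * smf_toeplitz J \<alpha> i j c d y u"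
      unfolding smf_toeplitz_def
      by (simp add: e1[OF L(1)] e1[OF L(2)] e1[OF L(3)] algebra_simps sum.distrib sum_distrib_left)
  qed
qed

lemma sum_split0: "(\<Sum>n\<le>d. g n) = g 0 + (\<Sum>n\<in>{1..d}. g (n::nat))"
  by (simp add: atMost_atLeast0 sum.atLeast_Suc_atMost)

lemma eigen:
  fixes c :: "nat \<Rightarrow> complex" and d :: nat and \<alpha> :: "nat \<times> nat \<Rightarrow> real" and z :: complex
  assumes "(i,j) \<in> J" "i \<noteq> j \<longrightarrow> (j,j) \<in> J" "z \<noteq> 0"
  defines "R \<equiv> (\<Sum>n\<le>d. c n * (complex_of_real ((\<alpha> (i, j))\<^sup>2) * z) ^ n)"
  defines "q \<equiv> complex_of_real (\<alpha> (i,j)) * z"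
  shows "(\<lambda>w. if w = smf_vac i j then 1 else 0) =
    (\<lambda>u. (z * (1/z + R)) * om i j q u + (- z) * smf_toeplitz J \<alpha> i j c d (om i j q) u)"
proof
  fix u
  have bq: "complex_of_real (\<alpha> (i,j)) * q = complex_of_real ((\<alpha> (i, j))\<^sup>2) * z"
    unfolding q_def by (simp add: power2_eq_square)
  have T: "z * smf_toeplitz J \<alpha> i j c d (om i j q) u =
     om i j q u - (if u = smf_vac i j then 1 else 0)
     + z * c 0 * om i j q u + z * (\<Sum>n\<in>{1..d}. c n * (complex_of_real ((\<alpha> (i, j))\<^sup>2) * z) ^ n) * om i j q u"
  proof -
    have Lq: "z * smf_l J \<alpha> i j (om i j q) u = om i j q u - (if u = smf_vac i j then 1 else 0)"
      using l_om[OF assms(1,2), of z \<alpha> u] unfolding q_def .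
    show ?thesis
      unfolding smf_toeplitz_def lstar_pow_om[OF assms(1,2)] unit_om[OF assms(1,2)] bq
      using Lq by (simp add: distrib_left sum_distrib_left sum_distrib_right mult_ac)
  qed
  have "z * (1/z + R) = 1 + z * R" using assms(3) by (simp add: field_simps)
  then show "(if u = smf_vac i j then 1 else 0) =
    (z * (1/z + R)) * om i j q u + (- z) * smf_toeplitz J \<alpha> i j c d (om i j q) u"
    using T unfolding R_def sum_split0[of _ d] by (simp add: algebra_simps)
qed

definition bnd :: "vec \<Rightarrow> real \<Rightarrow> bool" where
  "bnd v M \<longleftrightarrow> (\<forall>u. norm (v u) \<le> M)"

lemma bnd_lstar_pow:
  assumes "bnd v M" "M \<ge> 0"
  shows "bnd ((smf_lstar J \<alpha> i j ^^ n) v) (\<bar>\<alpha> (i,j)\<bar> ^ n * M)"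
proof (induction n)
  case 0 then show ?case using assms by simp
next
  case (Suc n)
  show ?case unfolding bnd_def
  proof
    fix u
    have "norm ((smf_lstar J \<alpha> i j ^^ Suc n) v u) \<le> \<bar>\<alpha> (i,j)\<bar> * (\<bar>\<alpha> (i,j)\<bar> ^ n * M)"
      using Suc assms(2) unfolding bnd_def
      by (auto simp: smf_lstar_def norm_mult intro!: mult_left_mono)
    then show "norm ((smf_lstar J \<alpha> i j ^^ Suc n) v u) \<le> \<bar>\<alpha> (i,j)\<bar> ^ Suc n * M"
      by (simp add: mult_ac)
  qed
qed

definition Cst :: "(nat \<times> nat \<Rightarrow> real) \<Rightarrow> nat \<Rightarrow> nat \<Rightarrow> (nat \<Rightarrow> complex) \<Rightarrow> nat \<Rightarrow> real" where
  "Cst \<alpha> i j c d = \<bar>\<alpha> (i,j)\<bar> + norm (c 0) + (\<Sum>n\<in>{1..d}. norm (c n) * \<bar>\<alpha> (i,j)\<bar> ^ n)"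

lemma Cst_nonneg: "Cst \<alpha> i j c d \<ge> 0"
  unfolding Cst_def by (intro add_nonneg_nonneg sum_nonneg) auto

lemma bnd_toep:
  assumes "bnd v M" "M \<ge> 0"
  shows "bnd (smf_toeplitz J \<alpha> i j c d v) (Cst \<alpha> i j c d * M)"
  unfolding bnd_def
proof
  fix u
  have b1: "norm (smf_l J \<alpha> i j v u) \<le> \<bar>\<alpha> (i,j)\<bar> * M"
    using assms unfolding bnd_def by (auto simp: smf_l_def norm_mult intro!: mult_left_mono)
  have b2: "norm (c 0 * smf_unit J i j v u) \<le> norm (c 0) * M"
    using assms unfolding bnd_def by (auto simp: smf_unit_def norm_mult intro!: mult_left_mono)
  have b3: "norm (\<Sum>n\<in>{1..d}. c n * (smf_lstar J \<alpha> i j ^^ n) v u)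
       \<le> (\<Sum>n\<in>{1..d}. norm (c n) * \<bar>\<alpha> (i,j)\<bar> ^ n) * M"
  proof -
    have "norm (\<Sum>n\<in>{1..d}. c n * (smf_lstar J \<alpha> i j ^^ n) v u)
        \<le> (\<Sum>n\<in>{1..d}. norm (c n * (smf_lstar J \<alpha> i j ^^ n) v u))" by (rule norm_sum)
    also have "\<dots> \<le> (\<Sum>n\<in>{1..d}. norm (c n) * (\<bar>\<alpha> (i,j)\<bar> ^ n * M))"
      using bnd_lstar_pow[OF assms, where J=J and \<alpha>=\<alpha> and i=i and j=j] unfolding bnd_def
      by (auto simp: norm_mult intro!: sum_mono mult_left_mono)
    finally show ?thesis by (simp add: sum_distrib_right mult.assoc)
  qed
  have "norm (smf_toeplitz J \<alpha> i j c d v u) \<le> norm (smf_l J \<alpha> i j v u) + norm (c 0 * smf_unit J i j v u)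
     + norm (\<Sum>n\<in>{1..d}. c n * (smf_lstar J \<alpha> i j ^^ n) v u)"
    unfolding smf_toeplitz_def
    using norm_triangle_ineq[of "smf_l J \<alpha> i j v u + c 0 * smf_unit J i j v u" "\<Sum>n\<in>{1..d}. c n * (smf_lstar J \<alpha> i j ^^ n) v u"]
      norm_triangle_ineq[of "smf_l J \<alpha> i j v u" "c 0 * smf_unit J i j v u"] by linarith
  also have "\<dots> \<le> Cst \<alpha> i j c d * M" unfolding Cst_def distrib_right using b1 b2 b3 by linarith
  finally show "norm (smf_toeplitz J \<alpha> i j c d v u) \<le> Cst \<alpha> i j c d * M" .
qed

lemma bnd_toep_pow:
  assumes "bnd v M" "M \<ge> 0"
  shows "bnd ((smf_toeplitz J \<alpha> i j c d ^^ n) v) (Cst \<alpha> i j c d ^ n * M)"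
proof (induction n)
  case 0 then show ?case using assms by simp
next
  case (Suc n)
  have "bnd (smf_toeplitz J \<alpha> i j c d ((smf_toeplitz J \<alpha> i j c d ^^ n) v)) (Cst \<alpha> i j c d * (Cst \<alpha> i j c d ^ n * M))"
    by (rule bnd_toep[OF Suc]) (use assms Cst_nonneg in simp)
  then show ?case by (simp add: mult_ac)
qed

lemma bnd_om: "norm q \<le> 1 \<Longrightarrow> bnd (om i j q) 1"
  by (auto simp: bnd_def om_def norm_power power_le_one)

theorem proposition4p1:
  fixes J :: "(nat \<times> nat) set" and \<alpha> :: "nat \<times> nat \<Rightarrow> real"
    and i j d :: nat and c :: "nat \<Rightarrow> complex"
  assumes "J \<subseteq> {1, 2} \<times> {1, 2}"
    and "\<forall>p\<in>J. \<alpha> p > 0"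
    and "(i, j) \<in> J"
    and "i \<noteq> j \<longrightarrow> (j, j) \<in> J"
  shows "is_R_transform (smf_moment J \<alpha> i j c d)
           (\<lambda>z. \<Sum>n\<le>d. c n * (complex_of_real ((\<alpha> (i, j))\<^sup>2) * z) ^ n)"
proof -
  define \<beta> where "\<beta> = \<alpha> (i,j)"
  have bpos: "\<beta> > 0" using assms(2,3) unfolding \<beta>_def by blast
  define C where "C = Cst \<alpha> i j c d"
  define D where "D = (\<Sum>n\<le>d. norm (c n) * (\<beta>\<^sup>2) ^ n)"
  have C0: "C \<ge> 0" unfolding C_def by (rule Cst_nonneg)
  have D0: "D \<ge> 0" unfolding D_def by (intro sum_nonneg) auto
  define \<epsilon> where "\<epsilon> = min 1 (min (1/\<beta>) (1/(C+D+1)))"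
  have epos: "\<epsilon> > 0" unfolding \<epsilon>_def using bpos C0 D0 by auto
  define A where "A = smf_toeplitz J \<alpha> i j c d"
  define vac where "vac = smf_vac i j"
  show ?thesis unfolding is_R_transform_def
  proof (intro exI[of _ \<epsilon>] conjI allI impI epos)
    fix z :: complex
    assume z: "0 < norm z \<and> norm z < \<epsilon>"
    have z0: "z \<noteq> 0" using z by auto
    have z1: "norm z \<le> 1" using z unfolding \<epsilon>_def by auto
    have zb: "norm z < 1/\<beta>" using z unfolding \<epsilon>_def by auto
    have zc: "norm z < 1/(C+D+1)" using z unfolding \<epsilon>_def by auto
    define R where "R = (\<Sum>n\<le>d. c n * (complex_of_real ((\<alpha> (i, j))\<^sup>2) * z) ^ n)"
    define w where "w = 1/z + R"
    define q where "q = complex_of_real (\<alpha> (i,j)) * z"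
    have nq: "norm q \<le> 1"
    proof -
      have "norm q = \<beta> * norm z" unfolding q_def \<beta>_def using bpos \<beta>_def by (simp add: norm_mult)
      also have "\<dots> \<le> \<beta> * (1/\<beta>)" using zb bpos by (intro mult_left_mono) auto
      finally show ?thesis using bpos by simp
    qed
    have nR: "norm R \<le> D"
    proof -
      have "norm R \<le> (\<Sum>n\<le>d. norm (c n * (complex_of_real ((\<alpha> (i, j))\<^sup>2) * z) ^ n))"
        unfolding R_def by (rule norm_sum)
      also have "\<dots> \<le> D" unfolding D_def
      proof (rule sum_mono)
        fix n assume "n \<in> {..d}"
        have "norm ((complex_of_real ((\<alpha> (i, j))\<^sup>2) * z) ^ n) = (\<beta>\<^sup>2 * norm z) ^ n"
          by (simp add: norm_mult norm_power \<beta>_def)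
        also have "\<dots> \<le> (\<beta>\<^sup>2) ^ n" using z1 z by (intro power_mono) (auto intro: mult_left_le)
        finally show "norm (c n * (complex_of_real ((\<alpha> (i, j))\<^sup>2) * z) ^ n) \<le> norm (c n) * (\<beta>\<^sup>2) ^ n"
          by (simp add: norm_mult mult_left_mono)
      qed
      finally show ?thesis .
    qed
    have inv: "1 / norm z > C + D + 1"
    proof -
      have "C + D + 1 > 0" using C0 D0 by linarith
      then show ?thesis using zc z by (simp add: field_simps)
    qed
    have nw: "norm w > C + 1"
    proof -
      have "norm (1/z) \<le> norm w + norm R" unfolding w_def
        using norm_triangle_ineq4[of "1/z + R" R] by simp
      then show ?thesis using nR inv by (simp add: norm_divide)
    qed
    have w0: "w \<noteq> 0" using nw C0 by auto
    define P where "P n = (A ^^ n) (om i j q)" for n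
    have linA: "\<And>n. lin (A ^^ n)" unfolding A_def by (intro lin_pow lin_toep)
    have eig: "(\<lambda>u. if u = vac then 1 else 0) = (\<lambda>u. (z * w) * om i j q u + (- z) * A (om i j q) u)"
      using eigen[OF assms(3,4) z0, where \<alpha>=\<alpha> and c=c and d=d] unfolding A_def vac_def w_def R_def q_def .
    have mom: "smf_moment J \<alpha> i j c d n = z * w * P n vac - z * P (Suc n) vac" for n
    proof -
      have "smf_moment J \<alpha> i j c d n = (A ^^ n) (\<lambda>u. if u = vac then 1 else 0) vac"
        unfolding smf_moment_def smf_state_def A_def vac_def ..
      also have "\<dots> = (A ^^ n) (\<lambda>u. (z * w) * om i j q u + (- z) * A (om i j q) u) vac"
        by (simp only: eig)
      also have "\<dots> = (z * w) * P n vac + (- z) * (A ^^ n) (A (om i j q)) vac"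
        using linA[of n] unfolding lin_def P_def by metis
      also have "(A ^^ n) (A (om i j q)) = P (Suc n)" unfolding P_def by (simp only: funpow_Suc_right comp_def)
      finally show ?thesis by simp
    qed
    define f where "f n = z * P n vac / w ^ n" for n
    have trm: "cauchy_series (smf_moment J \<alpha> i j c d) w = (\<lambda>n. f n - f (Suc n))"
      unfolding cauchy_series_def f_def mom using w0 by (auto simp: field_simps)
    have bP: "norm (P n vac) \<le> C ^ n" for n
      using bnd_toep_pow[OF bnd_om[OF nq] , where J=J and \<alpha>=\<alpha> and i=i and j=j and c=c and d=d and n=n]
      unfolding bnd_def P_def A_def C_def by simp
    have flim: "f \<longlonglongrightarrow> 0"
    proof -
      have lim: "(\<lambda>n. (C / norm w) ^ n) \<longlonglongrightarrow> 0"
        by (rule LIMSEQ_power_zero) (use nw C0 in \<open>simp add: divide_less_eq\<close>)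
      have ev: "\<forall>\<^sub>F n in sequentially. norm (f n) \<le> norm ((C / norm w) ^ n) * norm z"
      proof (intro always_eventually allI)
        fix n
        have "norm (f n) = norm z * norm (P n vac) / norm w ^ n"
          unfolding f_def by (simp add: norm_mult norm_divide norm_power)
        also have "\<dots> \<le> norm z * C ^ n / norm w ^ n"
          using bP[of n] by (intro divide_right_mono mult_left_mono) auto
        finally show "norm (f n) \<le> norm ((C / norm w) ^ n) * norm z"
          using C0 by (simp add: power_divide mult.commute)
      qed
      show ?thesis by (rule tendsto_0_le[OF lim ev])
    qed
    have f0: "f 0 = z"
      unfolding f_def P_def vac_def by (simp add: om_def)
    have "(\<lambda>n. f n - f (Suc n)) sums (f 0 - 0)" by (rule telescope_sums'[OF flim])
    then show "cauchy_series (smf_moment J \<alpha> i j c d) (1 / z + (\<Sum>n\<le>d. c n * (complex_of_real ((\<alpha> (i, j))\<^sup>2) * z) ^ n))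
        sums z"
      using trm f0 unfolding w_def R_def by simp
  qed
qed
end
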